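(* Let $M$ be a connected manifold of dimension $n+1\ge2$ with a Kähler affine structure $(\nabla,g)$ that is Kähler affine Einstein, i.e. $\mathcal{R}_{ij}=f g_{ij}$ for some function $f$. Then the Kähler affine scalar curvature $\mathcal{S}$ is constant.
   Context: A Kähler affine structure $(\nabla,g)$ consists of a flat torsion-free affine connection $\nabla$ and a pseudo-Riemannian metric $g$ with $\nabla_{[i}g_{j]k}=0$. The Koszul form is $H_i=g^{pq}\nabla_ig_{pq}$, the Kähler affine Ricci tensor is $\mathcal{R}_{ij}=-\nabla_iH_j$, and $\mathcal{S}=g^{ij}\mathcal{R}_{ij}$. *)

theory Defs
  imports "HOL-Analysis.Analysis"
begin

definition pd :: "'n::finite \<Rightarrow> (real^'n \<Rightarrow> real) \<Rightarrow> real^'n \<Rightarrow> real" where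
  "pd i h x = frechet_derivative h (at x) (axis i 1)"

fun Ck :: "nat \<Rightarrow> (real^'n::finite) set \<Rightarrow> (real^'n \<Rightarrow> real) \<Rightarrow> bool" where
  "Ck 0 S h = continuous_on S h"
| "Ck (Suc k) S h = (h differentiable_on S \<and> (\<forall>i. Ck k S (pd i h)))"

definition smooth_on :: "(real^'n::finite) set \<Rightarrow> (real^'n \<Rightarrow> real) \<Rightarrow> bool" where
  "smooth_on S h = (\<forall>k. Ck k S h)"

type_synonym ('a, 'n) chart = "'a set \<times> ('a \<Rightarrow> real^'n)"

text \<open>Transition map from chart c to chart d, defined on the image of the overlap under c.\<close>
definition transition :: "('a, 'n::finite) chart \<Rightarrow> ('a, 'n) chart \<Rightarrow> real^'n \<Rightarrow> real^'n" where
  "transition c d y = snd d (inv_into (fst c) (snd c) y)"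

definition overlap_img :: "('a, 'n::finite) chart \<Rightarrow> ('a, 'n) chart \<Rightarrow> (real^'n) set" where
  "overlap_img c d = snd c ` (fst c \<inter> fst d)"

definition manifold_atlas :: "'a topology \<Rightarrow> ('a, 'n::finite) chart set \<Rightarrow> bool" where
  "manifold_atlas X A \<longleftrightarrow>
     Hausdorff_space X \<and> second_countable X \<and>
     (\<forall>c\<in>A. openin X (fst c) \<and> open (snd c ` fst c) \<and>
        homeomorphic_map (subtopology X (fst c)) (top_of_set (snd c ` fst c)) (snd c)) \<and>
     (\<Union>c\<in>A. fst c) = topspace X"

text \<open>Flat torsion-free connection, given by an atlas of affine charts (locally affine
  transition maps), together with a smooth pseudo-Riemannian metric given in each chart
  by its Gram matrix G c y (tensorial transformation law on overlaps), satisfying the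
  Kaehler affine condition nabla_i g_jk = nabla_j g_ik (in affine coordinates nabla = d).\<close>
definition kahler_affine :: "'a topology \<Rightarrow> ('a, 'n::finite) chart set
      \<Rightarrow> (('a, 'n) chart \<Rightarrow> real^'n \<Rightarrow> real^'n^'n) \<Rightarrow> bool" where
  "kahler_affine X A G \<longleftrightarrow>
     manifold_atlas X A \<and>
     (\<forall>c\<in>A. \<forall>d\<in>A. \<forall>x\<in>overlap_img c d. \<exists>r>0. \<exists>(L::real^'n^'n) b.
        \<forall>y\<in>ball x r \<inter> overlap_img c d.
          transition c d y = L *v y + b \<and>
          G c y = transpose L ** G d (transition c d y) ** L) \<and>
     (\<forall>c\<in>A. \<forall>y\<in>snd c ` fst c. transpose (G c y) = G c y \<and> det (G c y) \<noteq> 0) \<and>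
     (\<forall>c\<in>A. \<forall>i j. smooth_on (snd c ` fst c) (\<lambda>z. G c z $ i $ j)) \<and>
     (\<forall>c\<in>A. \<forall>y\<in>snd c ` fst c. \<forall>i j k.
        pd i (\<lambda>z. G c z $ j $ k) y = pd j (\<lambda>z. G c z $ i $ k) y)"

definition koszul :: "(('a, 'n::finite) chart \<Rightarrow> real^'n \<Rightarrow> real^'n^'n)
      \<Rightarrow> ('a, 'n) chart \<Rightarrow> 'n \<Rightarrow> real^'n \<Rightarrow> real" where
  "koszul G c i y = (\<Sum>p\<in>UNIV. \<Sum>q\<in>UNIV. matrix_inv (G c y) $ p $ q * pd i (\<lambda>z. G c z $ p $ q) y)"

definition ka_ricci :: "(('a, 'n::finite) chart \<Rightarrow> real^'n \<Rightarrow> real^'n^'n)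
      \<Rightarrow> ('a, 'n) chart \<Rightarrow> 'n \<Rightarrow> 'n \<Rightarrow> real^'n \<Rightarrow> real" where
  "ka_ricci G c i j y = - pd i (\<lambda>z. koszul G c j z) y"

definition ka_scalar :: "(('a, 'n::finite) chart \<Rightarrow> real^'n \<Rightarrow> real^'n^'n)
      \<Rightarrow> ('a, 'n) chart \<Rightarrow> real^'n \<Rightarrow> real" where
  "ka_scalar G c y = (\<Sum>i\<in>UNIV. \<Sum>j\<in>UNIV. matrix_inv (G c y) $ i $ j * ka_ricci G c i j y)"

end

theory Submission
  imports Defs
begin

lemma pd_local:
  assumes "open S" "y \<in> S" "\<And>z. z \<in> S \<Longrightarrow> h z = h' z"
  shows "pd i h y = pd i h' y"
proof -
  have "(\<lambda>f'. (h has_derivative f') (at y)) = (\<lambda>f'. (h' has_derivative f') (at y))"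
  proof (rule ext, rule iffI)
    fix f' assume "(h has_derivative f') (at y)"
    then show "(h' has_derivative f') (at y)"
      by (rule has_derivative_transform_within_open[OF _ assms(1,2)]) (simp add: assms(3))
  next
    fix f' assume "(h' has_derivative f') (at y)"
    then show "(h has_derivative f') (at y)"
      by (rule has_derivative_transform_within_open[OF _ assms(1,2)]) (simp add: assms(3))
  qed
  then show ?thesis unfolding pd_def frechet_derivative_def by simp
qed

lemma pd_has:
  assumes "h differentiable (at y)"
  shows "(h has_derivative frechet_derivative h (at y)) (at y)"
  using assms frechet_derivative_works by blast

lemma pd_const: "pd i (\<lambda>z. c) y = 0"
proof -
  have "((\<lambda>z::real^'a. c) has_derivative (\<lambda>_. 0)) (at y)" by (rule has_derivative_const)
  from frechet_derivative_at[OF this] show ?thesis unfolding pd_def by (simp add: fun_eq_iff)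
qed

lemma pd_add:
  assumes "h differentiable (at y)" "g differentiable (at y)"
  shows "pd i (\<lambda>z. h z + g z) y = pd i h y + pd i g y"
proof -
  have "((\<lambda>z. h z + g z) has_derivative (\<lambda>v. frechet_derivative h (at y) v + frechet_derivative g (at y) v)) (at y)"
    by (intro has_derivative_add pd_has assms)
  from frechet_derivative_at[OF this] show ?thesis unfolding pd_def by (simp add: fun_eq_iff)
qed

lemma pd_mult:
  assumes "h differentiable (at y)" "g differentiable (at y)"
  shows "pd i (\<lambda>z. h z * g z) y = h y * pd i g y + pd i h y * g y"
proof -
  have "((\<lambda>z. h z * g z) has_derivative (\<lambda>v. h y * frechet_derivative g (at y) v + frechet_derivative h (at y) v * g y)) (at y)"
    by (intro has_derivative_mult pd_has assms)
  from frechet_derivative_at[OF this] show ?thesis unfolding pd_def by (simp add: fun_eq_iff)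
qed

lemma pd_inverse:
  assumes "h differentiable (at y)" "h y \<noteq> 0"
  shows "pd i (\<lambda>z. inverse (h z)) y = - (pd i h y * (inverse (h y) * inverse (h y)))"
proof -
  have "((\<lambda>z. inverse (h z)) has_derivative (\<lambda>v. - (inverse (h y) * frechet_derivative h (at y) v * inverse (h y)))) (at y)"
    by (rule Deriv.has_derivative_inverse[OF assms(2) pd_has[OF assms(1)]])
  from frechet_derivative_at[OF this] have "pd i (\<lambda>z. inverse (h z)) y = - (inverse (h y) * pd i h y * inverse (h y))"
    unfolding pd_def by (simp add: fun_eq_iff)
  then show ?thesis by (simp add: algebra_simps)
qed

lemma diff_on_cong:
  assumes "open S" "\<And>z. z \<in> S \<Longrightarrow> h z = h' z" "h differentiable_on S"
  shows "h' differentiable_on S"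
  unfolding differentiable_on_eq_differentiable_at[OF assms(1)]
proof
  fix z assume z: "z \<in> S"
  obtain e where e: "e > 0" "ball z e \<subseteq> S" using assms(1) z open_contains_ball by blast
  have "h differentiable (at z within UNIV)"
    using assms(3) z differentiable_on_eq_differentiable_at[OF assms(1)] by auto
  then have "h' differentiable (at z within UNIV)"
    by (rule differentiable_transform_within[OF _ e(1)]) (use e(2) assms(2) in \<open>auto simp: dist_commute subset_iff\<close>)
  then show "h' differentiable at z" by simp
qed

lemma Ck_cong:
  assumes "open S" "\<And>z. z \<in> S \<Longrightarrow> h z = h' z"
  shows "Ck k S h = Ck k S h'"
  using assms(2)
proof (induction k arbitrary: h h')
  case 0
  show ?case unfolding Ck.simps by (rule continuous_on_cong[OF refl]) (rule 0)
next
  case (Suc k)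
  have d: "(h differentiable_on S) \<longleftrightarrow> (h' differentiable_on S)"
  proof
    assume "h differentiable_on S" then show "h' differentiable_on S"
      by (rule diff_on_cong[OF assms(1) Suc.prems, rotated])
  next
    assume "h' differentiable_on S" then show "h differentiable_on S"
      by (rule diff_on_cong[OF assms(1), rotated]) (simp add: Suc.prems)
  qed
  have "Ck k S (pd i h) = Ck k S (pd i h')" for i
  proof (rule Suc.IH)
    fix z assume "z \<in> S"
    then show "pd i h z = pd i h' z" by (rule pd_local[OF assms(1)]) (rule Suc.prems)
  qed
  then show ?case using d by simp
qed

lemma Ck_transfer:
  assumes "open S" "Ck k S h'" "\<And>z. z \<in> S \<Longrightarrow> h z = h' z"
  shows "Ck k S h"
  using Ck_cong[OF assms(1), of h h' k] assms(2,3) by blast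

lemma Ck_Suc_imp: "Ck (Suc k) S h \<Longrightarrow> Ck k S h"
proof (induction k arbitrary: h)
  case 0
  then show ?case by (simp add: differentiable_imp_continuous_on)
next
  case (Suc k)
  have "Ck (Suc k) S (pd i h)" for i using Suc.prems by simp
  then have "Ck k S (pd i h)" for i using Suc.IH by blast
  then show ?case using Suc.prems by simp
qed

lemma Ck_le: "Ck m S h \<Longrightarrow> k \<le> m \<Longrightarrow> Ck k S h"
proof (induction m)
  case 0 then show ?case by simp
next
  case (Suc m)
  show ?case
  proof (cases "k = Suc m")
    case True then show ?thesis using Suc.prems by simp
  next
    case False
    then have "k \<le> m" using Suc.prems by simp
    moreover have "Ck m S h" using Ck_Suc_imp[OF Suc.prems(1)] .
    ultimately show ?thesis using Suc.IH by blast
  qed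
qed

lemma Ck_diff_at: "Ck (Suc k) S h \<Longrightarrow> open S \<Longrightarrow> y \<in> S \<Longrightarrow> h differentiable (at y)"
  by (simp add: differentiable_on_eq_differentiable_at)

lemma Ck_const: "Ck k S (\<lambda>z. c)"
proof (induction k arbitrary: c)
  case 0 then show ?case by simp
next
  case (Suc k)
  have e: "pd i (\<lambda>z. c) = (\<lambda>z. 0)" for i by (rule ext, rule pd_const)
  show ?case using Suc.IH[of 0] by (simp add: e)
qed

lemma Ck_add:
  assumes "open S"
  shows "Ck k S h \<Longrightarrow> Ck k S g \<Longrightarrow> Ck k S (\<lambda>z. h z + g z)"
proof (induction k arbitrary: h g)
  case 0 then show ?case by (simp add: continuous_on_add)
next
  case (Suc k)
  have "Ck k S (pd i (\<lambda>z. h z + g z))" for i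
  proof -
    have "Ck k S (\<lambda>z. pd i h z + pd i g z)" using Suc by simp
    moreover have "\<And>z. z \<in> S \<Longrightarrow> pd i (\<lambda>z. h z + g z) z = pd i h z + pd i g z"
      by (rule pd_add[OF Ck_diff_at[OF Suc.prems(1) assms] Ck_diff_at[OF Suc.prems(2) assms]])
    ultimately show ?thesis by (rule Ck_transfer[OF assms])
  qed
  moreover have "(\<lambda>z. h z + g z) differentiable_on S" using Suc.prems by (intro differentiable_on_add) auto
  ultimately show ?case by simp
qed

lemma Ck_mult:
  assumes "open S"
  shows "Ck k S h \<Longrightarrow> Ck k S g \<Longrightarrow> Ck k S (\<lambda>z. h z * g z)"
proof (induction k arbitrary: h g)
  case 0 then show ?case by (simp add: continuous_on_mult)
next
  case (Suc k)
  have "Ck k S (pd i (\<lambda>z. h z * g z))" for i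
  proof -
    have hk: "Ck k S h" using Suc.prems(1) by (rule Ck_Suc_imp)
    have gk: "Ck k S g" using Suc.prems(2) by (rule Ck_Suc_imp)
    have hi: "Ck k S (pd i h)" using Suc.prems(1) by simp
    have gi: "Ck k S (pd i g)" using Suc.prems(2) by simp
    have "Ck k S (\<lambda>z. h z * pd i g z + pd i h z * g z)"
      by (rule Ck_add[OF assms Suc.IH[OF hk gi] Suc.IH[OF hi gk]])
    moreover have "\<And>z. z \<in> S \<Longrightarrow> pd i (\<lambda>z. h z * g z) z = h z * pd i g z + pd i h z * g z"
      by (rule pd_mult[OF Ck_diff_at[OF Suc.prems(1) assms] Ck_diff_at[OF Suc.prems(2) assms]])
    ultimately show ?thesis by (rule Ck_transfer[OF assms])
  qed
  moreover have "(\<lambda>z. h z * g z) differentiable_on S" using Suc.prems by (intro differentiable_on_mult) auto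
  ultimately show ?case by simp
qed

lemma Ck_inverse:
  assumes "open S"
  shows "Ck k S h \<Longrightarrow> (\<And>z. z \<in> S \<Longrightarrow> h z \<noteq> 0) \<Longrightarrow> Ck k S (\<lambda>z. inverse (h z))"
proof (induction k arbitrary: h)
  case 0 then show ?case by (simp add: continuous_on_inverse)
next
  case (Suc k)
  have hk: "Ck k S h" using Suc.prems(1) by (rule Ck_Suc_imp)
  have ih: "Ck k S (\<lambda>z. inverse (h z))" using Suc.IH[OF hk] Suc.prems(2) by blast
  have "Ck k S (pd i (\<lambda>z. inverse (h z)))" for i
  proof -
    have "Ck k S (\<lambda>z. (-1) * (pd i h z * (inverse (h z) * inverse (h z))))"
      using Suc.prems(1) ih by (intro Ck_mult[OF assms] Ck_const) auto
    moreover have "\<And>z. z \<in> S \<Longrightarrow> pd i (\<lambda>z. inverse (h z)) z = (-1) * (pd i h z * (inverse (h z) * inverse (h z)))"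
    proof -
      fix z assume z: "z \<in> S"
      have "h differentiable (at z)" using Ck_diff_at[OF Suc.prems(1) assms z] .
      from pd_inverse[OF this Suc.prems(2)[OF z]] show "?thesis z" by simp
    qed
    ultimately show ?thesis by (rule Ck_transfer[OF assms])
  qed
  moreover have "(\<lambda>z. inverse (h z)) differentiable_on S"
    using Suc.prems by (intro differentiable_on_inverse) auto
  ultimately show ?case by simp
qed

lemma Ck_sum:
  assumes "open S" "finite I"
  shows "(\<And>a. a \<in> I \<Longrightarrow> Ck k S (h a)) \<Longrightarrow> Ck k S (\<lambda>z. \<Sum>a\<in>I. h a z)"
  using assms(2)
proof (induction I rule: finite_induct)
  case empty then show ?case using Ck_const[of k S 0] by simp
next
  case (insert x F)
  have "Ck k S (\<lambda>z. h x z + (\<Sum>a\<in>F. h a z))"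
    by (rule Ck_add[OF assms(1)]) (use insert in auto)
  then show ?case using insert.hyps by simp
qed

lemma Ck_prod:
  assumes "open S" "finite I"
  shows "(\<And>a. a \<in> I \<Longrightarrow> Ck k S (h a)) \<Longrightarrow> Ck k S (\<lambda>z. \<Prod>a\<in>I. h a z)"
  using assms(2)
proof (induction I rule: finite_induct)
  case empty then show ?case using Ck_const[of k S 1] by simp
next
  case (insert x F)
  have "Ck k S (\<lambda>z. h x z * (\<Prod>a\<in>F. h a z))"
    by (rule Ck_mult[OF assms(1)]) (use insert in auto)
  then show ?case using insert.hyps by simp
qed

lemma Ck_det:
  fixes M :: "real^'n \<Rightarrow> real^'m::finite^'m"
  assumes "open S" "\<And>i j. Ck k S (\<lambda>z. M z $ i $ j)"
  shows "Ck k S (\<lambda>z. det (M z))"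
proof -
  have P: "Ck k S (\<lambda>z. \<Prod>i\<in>(UNIV::'m set). M z $ i $ p i)" for p :: "'m \<Rightarrow> 'm"
    using Ck_prod[OF assms(1) finite_class.finite_UNIV, of k "\<lambda>i z. M z $ i $ p i"] assms(2) by blast
  have Q: "Ck k S (\<lambda>z. of_int (sign p) * (\<Prod>i\<in>(UNIV::'m set). M z $ i $ p i))" for p :: "'m \<Rightarrow> 'm"
    using Ck_mult[OF assms(1) Ck_const[of k S "of_int (sign p)"] P[of p]] by simp
  have fin: "finite {p. p permutes (UNIV::'m set)}" by (rule finite_permutations) simp
  have "Ck k S (\<lambda>z. \<Sum>p\<in>{p. p permutes (UNIV::'m set)}. of_int (sign p) * (\<Prod>i\<in>UNIV. M z $ i $ p i))"
    using Ck_sum[OF assms(1) fin, of k "\<lambda>p z. of_int (sign p) * (\<Prod>i\<in>UNIV. M z $ i $ p i)"] Q by blast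
  then show ?thesis unfolding det_def .
qed

lemma line_deriv:
  fixes w :: "real^'n \<Rightarrow> real"
  assumes "w differentiable (at (x + t *\<^sub>R axis k 1))"
  shows "((\<lambda>s. w (x + s *\<^sub>R axis k 1)) has_real_derivative pd k w (x + t *\<^sub>R axis k 1)) (at t)"
proof -
  let ?a = "axis k (1::real) :: real^'n"
  let ?D = "frechet_derivative w (at (x + t *\<^sub>R ?a))"
  have l: "((\<lambda>s. x + s *\<^sub>R ?a) has_derivative (\<lambda>h. h *\<^sub>R ?a)) (at t)"
    by (auto intro!: derivative_eq_intros)
  have w: "(w has_derivative ?D) (at (x + t *\<^sub>R ?a))" using assms frechet_derivative_works by blast
  have c: "((\<lambda>s. w (x + s *\<^sub>R ?a)) has_derivative (\<lambda>h. ?D (h *\<^sub>R ?a))) (at t)"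
    using has_derivative_compose[OF l w] .
  have lin: "linear ?D" using has_derivative_bounded_linear[OF w] bounded_linear.linear by blast
  have "(\<lambda>h. ?D (h *\<^sub>R ?a)) = (\<lambda>h. ?D ?a * h)"
    using linear_scale[OF lin] by (simp add: fun_eq_iff mult.commute)
  with c show ?thesis unfolding has_field_derivative_def pd_def by simp
qed

lemma mixed_mvt:
  fixes w :: "real^'n \<Rightarrow> real"
  assumes sub: "ball y r \<subseteq> S" and t: "0 < t" "2 * t < r"
    and dw: "\<And>z. z \<in> S \<Longrightarrow> w differentiable (at z)"
    and dkw: "\<And>z. z \<in> S \<Longrightarrow> pd k w differentiable (at z)"
  shows "\<exists>\<sigma> \<tau>. 0 < \<sigma> \<and> \<sigma> < t \<and> 0 < \<tau> \<and> \<tau> < t \<and>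
    w (y + t *\<^sub>R axis k 1 + t *\<^sub>R axis i 1) - w (y + t *\<^sub>R axis k 1) - w (y + t *\<^sub>R axis i 1) + w y
      = t * t * pd i (pd k w) (y + \<sigma> *\<^sub>R axis k 1 + \<tau> *\<^sub>R axis i 1)"
proof -
  let ?a = "axis k (1::real) :: real^'n"
  let ?b = "axis i (1::real) :: real^'n"
  have inS: "y + s *\<^sub>R ?a + u *\<^sub>R ?b \<in> S" if "0 \<le> s" "s \<le> t" "0 \<le> u" "u \<le> t" for s u
  proof -
    have "norm (s *\<^sub>R ?a + u *\<^sub>R ?b) \<le> norm (s *\<^sub>R ?a) + norm (u *\<^sub>R ?b)" by (rule norm_triangle_ineq)
    also have "\<dots> = s + u" using that by simp
    finally have "norm (s *\<^sub>R ?a + u *\<^sub>R ?b) < r" using that t by linarith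
    moreover have "dist y (y + (s *\<^sub>R ?a + u *\<^sub>R ?b)) = norm (s *\<^sub>R ?a + u *\<^sub>R ?b)"
      by (metis add_diff_cancel_left' dist_commute dist_norm)
    ultimately have "y + s *\<^sub>R ?a + u *\<^sub>R ?b \<in> ball y r" by (simp add: add.assoc)
    then show ?thesis using sub by blast
  qed
  define \<phi> where "\<phi> s = w (y + t *\<^sub>R ?b + s *\<^sub>R ?a) - w (y + s *\<^sub>R ?a)" for s
  define \<phi>' where "\<phi>' s = pd k w (y + t *\<^sub>R ?b + s *\<^sub>R ?a) - pd k w (y + s *\<^sub>R ?a)" for s
  have "DERIV \<phi> s :> \<phi>' s" if "0 \<le> s" "s \<le> t" for s
  proof -
    have e1: "y + t *\<^sub>R ?b + s *\<^sub>R ?a \<in> S" using inS[of s t] that t by (simp add: algebra_simps)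
    have e2: "y + s *\<^sub>R ?a \<in> S" using inS[of s 0] that t by simp
    show ?thesis unfolding \<phi>_def \<phi>'_def
      by (intro DERIV_diff line_deriv dw e1 e2)
  qed
  then obtain \<sigma> where \<sigma>: "0 < \<sigma>" "\<sigma> < t" "\<phi> t - \<phi> 0 = (t - 0) * \<phi>' \<sigma>"
    using MVT2[OF t(1), of \<phi> \<phi>'] by auto
  define \<psi> where "\<psi> u = pd k w (y + \<sigma> *\<^sub>R ?a + u *\<^sub>R ?b)" for u
  have "DERIV \<psi> u :> pd i (pd k w) (y + \<sigma> *\<^sub>R ?a + u *\<^sub>R ?b)" if "0 \<le> u" "u \<le> t" for u
    unfolding \<psi>_def by (intro line_deriv dkw inS) (use that \<sigma> in auto)
  then obtain \<tau> where \<tau>: "0 < \<tau>" "\<tau> < t" "\<psi> t - \<psi> 0 = (t - 0) * pd i (pd k w) (y + \<sigma> *\<^sub>R ?a + \<tau> *\<^sub>R ?b)"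
    using MVT2[OF t(1), of \<psi> "\<lambda>u. pd i (pd k w) (y + \<sigma> *\<^sub>R ?a + u *\<^sub>R ?b)"] by auto
  have "\<phi>' \<sigma> = \<psi> t - \<psi> 0" unfolding \<phi>'_def \<psi>_def by (simp add: algebra_simps)
  moreover have "\<phi> t - \<phi> 0 = w (y + t *\<^sub>R ?a + t *\<^sub>R ?b) - w (y + t *\<^sub>R ?a) - w (y + t *\<^sub>R ?b) + w y"
    unfolding \<phi>_def by (simp add: algebra_simps)
  ultimately show ?thesis using \<sigma> \<tau> by (intro exI[of _ \<sigma>] exI[of _ \<tau>]) auto
qed

lemma schwarz:
  fixes w :: "real^'n \<Rightarrow> real"
  assumes S: "open S" "y \<in> S"
    and dw: "\<And>z. z \<in> S \<Longrightarrow> w differentiable (at z)"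
    and dkw: "\<And>z. z \<in> S \<Longrightarrow> pd k w differentiable (at z)"
    and diw: "\<And>z. z \<in> S \<Longrightarrow> pd i w differentiable (at z)"
    and c1: "continuous_on S (pd i (pd k w))"
    and c2: "continuous_on S (pd k (pd i w))"
  shows "pd i (pd k w) y = pd k (pd i w) y"
proof (rule ccontr)
  let ?L1 = "pd i (pd k w) y" and ?L2 = "pd k (pd i w) y"
  assume ne: "?L1 \<noteq> ?L2"
  define d where "d = \<bar>?L1 - ?L2\<bar> / 2"
  have d: "d > 0" using ne by (simp add: d_def)
  obtain r where r: "r > 0" "ball y r \<subseteq> S" using S open_contains_ball by blast
  have "isCont (pd i (pd k w)) y" using c1 S continuous_on_eq_continuous_at by blast
  then obtain e1 where e1: "e1 > 0" "\<And>z. dist z y < e1 \<Longrightarrow> dist (pd i (pd k w) z) ?L1 < d"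
    using d unfolding continuous_at_eps_delta by blast
  have "isCont (pd k (pd i w)) y" using c2 S continuous_on_eq_continuous_at by blast
  then obtain e2 where e2: "e2 > 0" "\<And>z. dist z y < e2 \<Longrightarrow> dist (pd k (pd i w) z) ?L2 < d"
    using d unfolding continuous_at_eps_delta by blast
  define t where "t = min r (min e1 e2) / 4"
  have t: "0 < t" "2 * t < r" "2 * t < e1" "2 * t < e2" using r e1 e2 by (auto simp: t_def)
  obtain \<sigma> \<tau> where st: "0 < \<sigma>" "\<sigma> < t" "0 < \<tau>" "\<tau> < t" and
    eq1: "w (y + t *\<^sub>R axis k 1 + t *\<^sub>R axis i 1) - w (y + t *\<^sub>R axis k 1) - w (y + t *\<^sub>R axis i 1) + w y
      = t * t * pd i (pd k w) (y + \<sigma> *\<^sub>R axis k 1 + \<tau> *\<^sub>R axis i 1)"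
    using mixed_mvt[OF r(2) t(1,2) dw dkw] by blast
  obtain \<sigma>' \<tau>' where st': "0 < \<sigma>'" "\<sigma>' < t" "0 < \<tau>'" "\<tau>' < t" and
    eq2: "w (y + t *\<^sub>R axis i 1 + t *\<^sub>R axis k 1) - w (y + t *\<^sub>R axis i 1) - w (y + t *\<^sub>R axis k 1) + w y
      = t * t * pd k (pd i w) (y + \<sigma>' *\<^sub>R axis i 1 + \<tau>' *\<^sub>R axis k 1)"
    using mixed_mvt[OF r(2) t(1,2) dw diw] by blast
  have "y + t *\<^sub>R axis i 1 + t *\<^sub>R axis k 1 = y + t *\<^sub>R axis k 1 + t *\<^sub>R axis i 1"
    by (simp add: algebra_simps)
  then have "t * t * pd i (pd k w) (y + \<sigma> *\<^sub>R axis k 1 + \<tau> *\<^sub>R axis i 1)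
      = t * t * pd k (pd i w) (y + \<sigma>' *\<^sub>R axis i 1 + \<tau>' *\<^sub>R axis k 1)"
    using eq1 eq2 by (simp add: algebra_simps)
  then have eq: "pd i (pd k w) (y + \<sigma> *\<^sub>R axis k 1 + \<tau> *\<^sub>R axis i 1)
      = pd k (pd i w) (y + \<sigma>' *\<^sub>R axis i 1 + \<tau>' *\<^sub>R axis k 1)"
    using t(1) by simp
  have nb: "dist (y + s *\<^sub>R axis a 1 + u *\<^sub>R axis b 1) y < 2 * t"
    if "0 < s" "s < t" "0 < u" "u < t" for s u and a b :: 'n
  proof -
    have "norm (s *\<^sub>R axis a (1::real) + u *\<^sub>R axis b 1) \<le> norm (s *\<^sub>R axis a (1::real)) + norm (u *\<^sub>R axis b (1::real))"
      by (rule norm_triangle_ineq)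
    also have "\<dots> = s + u" using that by simp
    finally show ?thesis using that by (simp add: dist_norm add.assoc)
  qed
  have "dist (pd i (pd k w) (y + \<sigma> *\<^sub>R axis k 1 + \<tau> *\<^sub>R axis i 1)) ?L1 < d"
    using e1(2)[OF less_trans[OF nb[OF st, of k i] t(3)]] .
  moreover have "dist (pd k (pd i w) (y + \<sigma>' *\<^sub>R axis i 1 + \<tau>' *\<^sub>R axis k 1)) ?L2 < d"
    using e2(2)[OF less_trans[OF nb[OF st', of i k] t(4)]] .
  ultimately have "\<bar>?L1 - ?L2\<bar> < 2 * d" using eq by (simp add: dist_real_def)
  then show False by (simp add: d_def)
qed

lemma inv_props:
  fixes A :: "real^'n^'n"
  assumes "det A \<noteq> 0"
  shows "A ** matrix_inv A = mat 1 \<and> matrix_inv A ** A = mat 1"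
proof -
  have "invertible A" using assms invertible_det_nz by blast
  then have "\<exists>A'. A ** A' = mat 1 \<and> A' ** A = mat 1" unfolding invertible_def by blast
  then show ?thesis unfolding matrix_inv_def by (rule someI_ex)
qed

lemma inv_entry:
  fixes A :: "real^'n^'n"
  assumes "det A \<noteq> 0"
  shows "matrix_inv A $ p $ q = det (\<chi> i j. if j = p then axis q 1 $ i else A$i$j) / det A"
proof -
  define x where "x = matrix_inv A *v axis q 1"
  have "A *v x = axis q 1" unfolding x_def matrix_vector_mul_assoc using inv_props[OF assms] by simp
  then have "x = (\<chi> k. det (\<chi> i j. if j = k then axis q 1 $ i else A$i$j) / det A)"
    using cramer[OF assms] by blast
  then have "x $ p = det (\<chi> i j. if j = p then axis q 1 $ i else A$i$j) / det A" by simp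
  moreover have "x $ p = matrix_inv A $ p $ q"
    unfolding x_def by (simp add: matrix_vector_mult_def axis_def if_distrib cong: if_cong)
  ultimately show ?thesis by simp
qed

lemma Ck_inv:
  fixes M :: "real^'n::finite \<Rightarrow> real^'m::finite^'m"
  assumes S: "open S" and M: "\<And>i j. Ck k S (\<lambda>z. M z $ i $ j)" and d: "\<And>z. z \<in> S \<Longrightarrow> det (M z) \<noteq> 0"
  shows "Ck k S (\<lambda>z. matrix_inv (M z) $ p $ q)"
proof (rule Ck_transfer[OF S])
  have e: "Ck k S (\<lambda>z. (\<chi> i j. if j = p then axis q 1 $ i else M z$i$j) $ i $ j)" for i j
  proof (cases "j = p")
    case True then show ?thesis using Ck_const[of k S "axis q 1 $ i"] by simp
  next
    case False then show ?thesis using M[of i j] by simp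
  qed
  show "Ck k S (\<lambda>z. det (\<chi> i j. if j = p then axis q 1 $ i else M z$i$j) * inverse (det (M z)))"
    by (rule Ck_mult[OF S Ck_det[OF S e] Ck_inverse[OF S Ck_det[OF S M] d]])
  fix z assume "z \<in> S"
  then show "matrix_inv (M z) $ p $ q = det (\<chi> i j. if j = p then axis q 1 $ i else M z$i$j) * inverse (det (M z))"
    using inv_entry[OF d] by (simp add: divide_inverse)
qed

lemma lin_alg:
  fixes g :: "real^'n^'n" and v :: "'n \<Rightarrow> real"
  assumes card: "CARD('n) \<ge> 2" and sym: "transpose g = g" and d: "det g \<noteq> 0"
    and eq: "\<And>i j k. v k * g$i$j = v i * g$k$j"
  shows "v k = 0"
proof (rule ccontr)
  assume vk: "v k \<noteq> 0"
  have "UNIV \<noteq> {k}"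
  proof
    assume "UNIV = {k}"
    then have "card (UNIV::'n set) = card {k}" by (simp only:)
    then have "CARD('n) = 1" by simp
    with card show False by simp
  qed
  then obtain i where ik: "i \<noteq> k" by blast
  define x :: "real^'n" where "x = (\<chi> l. v k * (if l = i then 1 else 0) - v i * (if l = k then 1 else 0))"
  have x0: "x \<noteq> 0" using vk ik unfolding x_def by (auto simp: vec_eq_iff)
  have gs: "g$a$b = g$b$a" for a b
  proof -
    have "transpose g $ a $ b = g $ b $ a" by (simp add: transpose_def)
    then show ?thesis using sym by simp
  qed
  have "(g *v x) $ j = 0" for j
  proof -
    have "(g *v x) $ j = (\<Sum>l\<in>UNIV. g$j$l * (v k * (if l = i then 1 else 0) - v i * (if l = k then 1 else 0)))"
      unfolding x_def by (simp add: matrix_vector_mult_def)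
    also have "\<dots> = (\<Sum>l\<in>UNIV. v k * (if l = i then g$j$l else 0)) - (\<Sum>l\<in>UNIV. v i * (if l = k then g$j$l else 0))"
    proof -
      have "\<And>l. g$j$l * (v k * (if l = i then 1 else 0) - v i * (if l = k then 1 else 0))
          = v k * (if l = i then g$j$l else 0) - v i * (if l = k then g$j$l else 0)" by simp
      then show ?thesis by (simp only: sum_subtractf)
    qed
    also have "\<dots> = v k * g$j$i - v i * g$j$k"
      by (simp add: sum_distrib_left[symmetric])
    also have "\<dots> = v k * g$i$j - v i * g$k$j" using gs by simp
    also have "\<dots> = 0" using eq[of k i j] by simp
    finally show ?thesis .
  qed
  then have gx: "g *v x = 0" by (simp add: vec_eq_iff)
  have "invertible g" using d invertible_det_nz by blast
  then have "\<exists>B. B ** g = mat 1" unfolding invertible_def by blast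
  then have "\<forall>x. g *v x = 0 \<longrightarrow> x = 0" using matrix_left_invertible_ker by blast
  then show False using gx x0 by blast
qed

lemma key_local:
  fixes g :: "real^'n \<Rightarrow> real^'n^'n" and H :: "'n \<Rightarrow> real^'n \<Rightarrow> real" and F :: "real^'n \<Rightarrow> real"
  assumes U: "open U" "y0 \<in> U" and card: "CARD('n) \<ge> 2"
    and gsym: "\<And>y. y \<in> U \<Longrightarrow> transpose (g y) = g y"
    and gdet: "\<And>y. y \<in> U \<Longrightarrow> det (g y) \<noteq> 0"
    and gs: "\<And>i j. Ck 3 U (\<lambda>z. g z $ i $ j)"
    and kah: "\<And>y i j k. y \<in> U \<Longrightarrow> pd i (\<lambda>z. g z $ j $ k) y = pd j (\<lambda>z. g z $ i $ k) y"
    and Hs: "\<And>j. Ck 3 U (H j)"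
    and ein: "\<And>y i j. y \<in> U \<Longrightarrow> pd i (H j) y = F y * g y $ i $ j"
  shows "\<exists>r>0. ball y0 r \<subseteq> U \<and> (\<forall>y\<in>ball y0 r. F y = F y0)"
proof -
  have dU: "\<And>h z. Ck (Suc m) U h \<Longrightarrow> z \<in> U \<Longrightarrow> h differentiable (at z)" for m
    using Ck_diff_at U(1) by blast
  have gs': "Ck (Suc (Suc (Suc 0))) U (\<lambda>z. g z $ i $ j)" for i j using gs[of i j] by (simp only: numeral_3_eq_3)
  have Hs': "Ck (Suc (Suc (Suc 0))) U (H j)" for j using Hs[of j] by (simp only: numeral_3_eq_3)
  obtain a b where ab: "g y0 $ a $ b \<noteq> 0"
  proof (rule ccontr)
    assume "\<not> thesis"
    then have z: "g y0 $ a $ b = 0" for a b using that by blast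
    obtain a :: 'n where True by blast
    have "row a (g y0) = 0" using z by (simp add: row_def vec_eq_iff)
    then have "det (g y0) = 0" by (rule det_zero_row)
    then show False using gdet U by blast
  qed
  let ?gab = "\<lambda>z. g z $ a $ b"
  have "continuous_on U ?gab" using Ck_le[OF gs'[of a b], of 0] by simp
  then have "isCont ?gab y0" using U continuous_on_eq_continuous_at by blast
  then obtain r1 where r1: "r1 > 0" "\<And>z. dist z y0 < r1 \<Longrightarrow> dist (?gab z) (?gab y0) < \<bar>?gab y0\<bar>"
    using ab unfolding continuous_at_eps_delta by (metis zero_less_abs_iff)
  obtain r2 where r2: "r2 > 0" "ball y0 r2 \<subseteq> U" using U open_contains_ball by blast
  define r where "r = min r1 r2"
  define B where "B = ball y0 r"
  have r: "r > 0" using r1 r2 by (simp add: r_def)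
  have BU: "B \<subseteq> U" using r2 by (auto simp: B_def r_def)
  have oB: "open B" by (simp add: B_def)
  have gne: "?gab z \<noteq> 0" if "z \<in> B" for z
  proof
    assume "?gab z = 0"
    moreover have "dist z y0 < r1" using that by (simp add: B_def r_def dist_commute)
    ultimately show False using r1(2)[of z] by (simp add: dist_real_def)
  qed
  define Q where "Q z = pd a (H b) z * inverse (?gab z)" for z
  have FQ: "F z = Q z" if "z \<in> B" for z
    using ein[of z a b] that BU gne[OF that] by (auto simp: Q_def)
  have einQ: "pd i (H j) z = Q z * g z $ i $ j" if "z \<in> B" for z i j
    using ein[of z i j] FQ[OF that] that BU by auto
  have HC: "Ck (Suc (Suc 0)) U (pd i (H j))" for i j using Hs'[of j] by simp
  have gD: "(\<lambda>z. g z $ i $ j) differentiable (at z)" if "z \<in> U" for z i j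
    using dU[OF gs' that] .
  have QD: "Q differentiable (at z)" if "z \<in> B" for z
  proof -
    have zU: "z \<in> U" using that BU by blast
    have "pd a (H b) differentiable (at z)" using dU[OF HC zU] .
    moreover have "(\<lambda>z. inverse (?gab z)) differentiable (at z)"
      using differentiable_inverse[OF gD[OF zU] gne[OF that]] .
    ultimately show ?thesis unfolding Q_def[abs_def] by (rule differentiable_mult)
  qed
  have pdQ: "pd k Q z = 0" if zB: "z \<in> B" for z k
  proof -
    have zU: "z \<in> U" using zB BU by blast
    have E: "pd k Q z * g z $ i $ j = pd i Q z * g z $ k $ j" for i j k
    proof -
      have s: "pd k (pd i (H j)) z = pd i (pd k (H j)) z"
      proof (rule schwarz[OF U(1) zU])
        show "\<And>z. z \<in> U \<Longrightarrow> H j differentiable (at z)" using dU[OF Hs'] by blast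
        show "\<And>z. z \<in> U \<Longrightarrow> pd k (H j) differentiable (at z)" using dU[OF HC] by blast
        show "\<And>z. z \<in> U \<Longrightarrow> pd i (H j) differentiable (at z)" using dU[OF HC] by blast
        show "continuous_on U (pd k (pd i (H j)))" using Ck_le[OF HC[of i j], of "Suc 0"] by simp
        show "continuous_on U (pd i (pd k (H j)))" using Ck_le[OF HC[of k j], of "Suc 0"] by simp
      qed
      have l1: "pd k (pd i (H j)) z = pd k (\<lambda>w. Q w * g w $ i $ j) z"
        by (rule pd_local[OF oB zB]) (rule einQ)
      have l2: "pd i (pd k (H j)) z = pd i (\<lambda>w. Q w * g w $ k $ j) z"
        by (rule pd_local[OF oB zB]) (rule einQ)
      have m1: "pd k (\<lambda>w. Q w * g w $ i $ j) z = Q z * pd k (\<lambda>w. g w $ i $ j) z + pd k Q z * g z $ i $ j"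
        by (rule pd_mult[OF QD[OF zB] gD[OF zU]])
      have m2: "pd i (\<lambda>w. Q w * g w $ k $ j) z = Q z * pd i (\<lambda>w. g w $ k $ j) z + pd i Q z * g z $ k $ j"
        by (rule pd_mult[OF QD[OF zB] gD[OF zU]])
      have "pd k (\<lambda>w. g w $ i $ j) z = pd i (\<lambda>w. g w $ k $ j) z" by (rule kah[OF zU])
      then show ?thesis using s l1 l2 m1 m2 by simp
    qed
    show ?thesis by (rule lin_alg[OF card gsym[OF zU] gdet[OF zU]]) (rule E)
  qed
  have Q0: "(Q has_derivative (\<lambda>h. 0)) (at z within B)" if "z \<in> B" for z
  proof -
    let ?D = "frechet_derivative Q (at z)"
    have QH: "(Q has_derivative ?D) (at z)" using QD[OF that] frechet_derivative_works by blast
    have lin: "linear ?D" using has_derivative_bounded_linear[OF QH] bounded_linear.linear by blast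
    have "?D v = 0" for v
    proof -
      have "?D v = ?D (\<Sum>i\<in>UNIV. (v$i) *s axis i 1)" by (simp add: basis_expansion)
      also have "\<dots> = (\<Sum>i\<in>UNIV. v$i * ?D (axis i 1))"
        by (simp add: linear_sum[OF lin] scalar_mult_eq_scaleR linear_scale[OF lin])
      also have "\<dots> = 0" using pdQ[OF that] by (simp add: pd_def)
      finally show ?thesis .
    qed
    then have "?D = (\<lambda>h. 0)" by auto
    with QH show ?thesis by (simp add: has_derivative_at_withinI)
  qed
  obtain cc where cc: "\<forall>x\<in>B. Q x = cc"
    using has_derivative_zero_constant[of B Q] Q0 by (auto simp: B_def)
  have y0B: "y0 \<in> B" using r by (simp add: B_def)
  show ?thesis
  proof (intro exI[of _ r] conjI ballI)
    show "r > 0" by (rule r)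
    show "ball y0 r \<subseteq> U" using BU by (simp add: B_def)
    fix y assume "y \<in> ball y0 r"
    then have "y \<in> B" by (simp add: B_def)
    then show "F y = F y0" using FQ cc y0B by metis
  qed
qed

lemma locconst_const:
  fixes f :: "'a \<Rightarrow> real"
  assumes conn: "connected_space X"
    and loc: "\<And>p. p \<in> topspace X \<Longrightarrow> \<exists>V. openin X V \<and> p \<in> V \<and> (\<forall>q\<in>V. f q = f p)"
    and p0: "p0 \<in> topspace X"
  shows "\<forall>p\<in>topspace X. f p = f p0"
proof -
  define W where "W = {p \<in> topspace X. f p = f p0}"
  define W' where "W' = {p \<in> topspace X. f p \<noteq> f p0}"
  have oW: "openin X W" unfolding openin_subopen[of X W]
  proof
    fix x assume x: "x \<in> W"
    then have xt: "x \<in> topspace X" and fx: "f x = f p0" by (simp_all add: W_def)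
    obtain V where V: "openin X V" "x \<in> V" "\<forall>q\<in>V. f q = f x" using loc[OF xt] by blast
    have "V \<subseteq> topspace X" using openin_subset[OF V(1)] .
    then have "V \<subseteq> W" using V(3) fx by (auto simp: W_def)
    then show "\<exists>T. openin X T \<and> x \<in> T \<and> T \<subseteq> W" using V(1,2) by blast
  qed
  have oW': "openin X W'" unfolding openin_subopen[of X W']
  proof
    fix x assume x: "x \<in> W'"
    then have xt: "x \<in> topspace X" and fx: "f x \<noteq> f p0" by (simp_all add: W'_def)
    obtain V where V: "openin X V" "x \<in> V" "\<forall>q\<in>V. f q = f x" using loc[OF xt] by blast
    have "V \<subseteq> topspace X" using openin_subset[OF V(1)] .
    then have "V \<subseteq> W'" using V(3) fx by (auto simp: W'_def)
    then show "\<exists>T. openin X T \<and> x \<in> T \<and> T \<subseteq> W'" using V(1,2) by blast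
  qed
  have ne: "W \<noteq> {}" using p0 by (auto simp: W_def)
  have cov: "topspace X \<subseteq> W \<union> W'" by (auto simp: W_def W'_def)
  have dis: "W \<inter> W' = {}" by (auto simp: W_def W'_def)
  have nc: "\<not> (openin X W \<and> openin X W' \<and> topspace X \<subseteq> W \<union> W' \<and> W \<inter> W' = {} \<and> W \<noteq> {} \<and> W' \<noteq> {})"
  proof
    assume h: "openin X W \<and> openin X W' \<and> topspace X \<subseteq> W \<union> W' \<and> W \<inter> W' = {} \<and> W \<noteq> {} \<and> W' \<noteq> {}"
    have "\<exists>E1 E2. openin X E1 \<and> openin X E2 \<and> topspace X \<subseteq> E1 \<union> E2 \<and> E1 \<inter> E2 = {} \<and> E1 \<noteq> {} \<and> E2 \<noteq> {}"
      by (rule exI[of _ W], rule exI[of _ W'], rule h)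
    with conn show False unfolding connected_space_def by (rule notE)
  qed
  have "W' = {}" using nc oW oW' ne cov dis by blast
  then show ?thesis by (auto simp: W'_def)
qed

theorem lemma5p3:
  fixes X :: "'a topology"
    and A :: "('a, 'n::finite) chart set"
    and G :: "('a, 'n) chart \<Rightarrow> real^'n \<Rightarrow> real^'n^'n"
    and f :: "'a \<Rightarrow> real"
  assumes "CARD('n) \<ge> 2"
    and "connected_space X"
    and "kahler_affine X A G"
    and "\<forall>c\<in>A. \<forall>p\<in>fst c. \<forall>i j.
           ka_ricci G c i j (snd c p) = f p * (G c (snd c p) $ i $ j)"
  shows "\<exists>s. \<forall>c\<in>A. \<forall>p\<in>fst c. ka_scalar G c (snd c p) = s"
proof -
  note KA = assms(3)[unfolded kahler_affine_def manifold_atlas_def]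
  have chart: "openin X (fst c)" "open (snd c ` fst c)"
      "homeomorphic_map (subtopology X (fst c)) (top_of_set (snd c ` fst c)) (snd c)" if "c \<in> A" for c
    using KA that by auto
  have cover: "(\<Union>c\<in>A. fst c) = topspace X" using KA by blast
  have symdet: "transpose (G c y) = G c y" "det (G c y) \<noteq> 0" if "c \<in> A" "y \<in> snd c ` fst c" for c y
    using KA that by auto
  have smooth: "smooth_on (snd c ` fst c) (\<lambda>z. G c z $ i $ j)" if "c \<in> A" for c i j
    using KA that by auto
  have kah: "pd i (\<lambda>z. G c z $ j $ k) y = pd j (\<lambda>z. G c z $ i $ k) y"
    if "c \<in> A" "y \<in> snd c ` fst c" for c y i j k
    using KA that by auto
  have loc: "\<exists>V. openin X V \<and> p \<in> V \<and> (\<forall>q\<in>V. f q = f p)" if p: "p \<in> topspace X" for p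
  proof -
    obtain c where c: "c \<in> A" "p \<in> fst c" using p cover by blast
    define U where "U = snd c ` fst c"
    define \<phi> where "\<phi> = snd c"
    define F where "F y = - f (inv_into (fst c) \<phi> y)" for y
    have oU: "open U" using chart[OF c(1)] by (simp add: U_def)
    have sub: "fst c \<subseteq> topspace X" using chart(1)[OF c(1)] openin_subset by blast
    have hm: "homeomorphic_map (subtopology X (fst c)) (top_of_set U) \<phi>"
      using chart(3)[OF c(1)] by (simp add: U_def \<phi>_def)
    have inj: "inj_on \<phi> (fst c)"
      using homeomorphic_imp_injective_map[OF hm] sub by (simp add: Int_absorb1)
    have gsm: "Ck m U (\<lambda>z. G c z $ i $ j)" for m i j
      using smooth[OF c(1)] by (simp add: smooth_on_def U_def)
    have kz: "koszul G c j = (\<lambda>y. \<Sum>p\<in>UNIV. \<Sum>q\<in>UNIV. matrix_inv (G c y) $ p $ q * pd j (\<lambda>z. G c z $ p $ q) y)" for j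
      by (rule ext) (simp add: koszul_def)
    have Hs: "Ck 3 U (koszul G c j)" for j
      unfolding kz
    proof (intro Ck_sum[OF oU] finite_class.finite_UNIV)
      fix p q
      have "Ck 3 U (\<lambda>y. matrix_inv (G c y) $ p $ q)"
        by (rule Ck_inv[OF oU gsm]) (use symdet[OF c(1)] in \<open>simp add: U_def\<close>)
      moreover have "Ck 3 U (pd j (\<lambda>z. G c z $ p $ q))" using gsm[of "Suc 3" p q, unfolded Ck.simps(2)] by blast
      ultimately show "Ck 3 U (\<lambda>y. matrix_inv (G c y) $ p $ q * pd j (\<lambda>z. G c z $ p $ q) y)"
        by (rule Ck_mult[OF oU])
    qed
    have ein: "pd i (koszul G c j) y = F y * G c y $ i $ j" if y: "y \<in> U" for y i j
    proof -
      let ?p = "inv_into (fst c) \<phi> y"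
      have pc: "?p \<in> fst c" using y by (simp add: U_def \<phi>_def inv_into_into)
      have py: "snd c ?p = y" using y by (simp add: U_def \<phi>_def f_inv_into_f)
      have "ka_ricci G c i j (snd c ?p) = f ?p * (G c (snd c ?p) $ i $ j)"
        using assms(4) c(1) pc by blast
      then show ?thesis using py by (simp add: ka_ricci_def F_def)
    qed
    obtain r where r: "r > 0" "ball (\<phi> p) r \<subseteq> U" "\<forall>y\<in>ball (\<phi> p) r. F y = F (\<phi> p)"
    proof -
      have "\<exists>r>0. ball (\<phi> p) r \<subseteq> U \<and> (\<forall>y\<in>ball (\<phi> p) r. F y = F (\<phi> p))"
      proof (rule key_local[OF oU _ assms(1)])
        show "\<phi> p \<in> U" using c by (simp add: U_def \<phi>_def)
        show "\<And>y. y \<in> U \<Longrightarrow> transpose (G c y) = G c y" using symdet[OF c(1)] by (simp add: U_def)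
        show "\<And>y. y \<in> U \<Longrightarrow> det (G c y) \<noteq> 0" using symdet[OF c(1)] by (simp add: U_def)
        show "\<And>i j. Ck 3 U (\<lambda>z. G c z $ i $ j)" by (rule gsm)
        show "\<And>y i j k. y \<in> U \<Longrightarrow> pd i (\<lambda>z. G c z $ j $ k) y = pd j (\<lambda>z. G c z $ i $ k) y"
          using kah[OF c(1)] by (simp add: U_def)
        show "\<And>j. Ck 3 U (koszul G c j)" by (rule Hs)
        show "\<And>y i j. y \<in> U \<Longrightarrow> pd i (koszul G c j) y = F y * G c y $ i $ j" by (rule ein)
      qed
      then show ?thesis using that by blast
    qed
    define V where "V = {q \<in> topspace (subtopology X (fst c)). \<phi> q \<in> ball (\<phi> p) r}"
    have "openin (subtopology X (fst c)) V"
      unfolding V_def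
      by (rule openin_continuous_map_preimage[OF homeomorphic_imp_continuous_map[OF hm]])
         (rule open_subset[OF r(2) open_ball])
    then have oV: "openin X V" using openin_open_subtopology[OF chart(1)[OF c(1)]] by blast
    have Vc: "V \<subseteq> fst c" by (auto simp: V_def)
    have pV: "p \<in> V" using c p r(1) by (simp add: V_def)
    have "\<forall>q\<in>V. f q = f p"
    proof
      fix q assume q: "q \<in> V"
      then have "F (\<phi> q) = F (\<phi> p)" using r(3) by (simp add: V_def)
      moreover have "inv_into (fst c) \<phi> (\<phi> q) = q" using inj q Vc by (simp add: inv_into_f_f subsetD)
      moreover have "inv_into (fst c) \<phi> (\<phi> p) = p" using inj c(2) by (simp add: inv_into_f_f)
      ultimately show "f q = f p" by (simp add: F_def)
    qed
    then show ?thesis using oV pV by blast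
  qed
  show ?thesis
  proof (cases "topspace X = {}")
    case True
    then have "\<forall>c\<in>A. fst c = {}" using cover by blast
    then show ?thesis by simp
  next
    case False
    then obtain p0 where p0: "p0 \<in> topspace X" by blast
    have const: "\<forall>p\<in>topspace X. f p = f p0" by (rule locconst_const[OF assms(2) loc p0])
    show ?thesis
    proof (intro exI[of _ "f p0 * real CARD('n)"] ballI)
      fix c p assume c: "c \<in> A" and p: "p \<in> fst c"
      let ?g = "G c (snd c p)"
      have pX: "p \<in> topspace X" using c p cover by blast
      have yU: "snd c p \<in> snd c ` fst c" using p by simp
      have sy: "transpose ?g = ?g" and dg: "det ?g \<noteq> 0" using symdet[OF c yU] by auto
      have gs: "?g $ a $ b = ?g $ b $ a" for a b
      proof -
        have "transpose ?g $ a $ b = ?g $ b $ a" by (simp add: transpose_def)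
        then show ?thesis using sy by simp
      qed
      have inv1: "matrix_inv ?g ** ?g = mat 1" using inv_props[OF dg] by blast
      have diag: "(\<Sum>j\<in>UNIV. matrix_inv ?g $ i $ j * ?g $ i $ j) = 1" for i
      proof -
        have "(matrix_inv ?g ** ?g) $ i $ i = 1" using inv1 by (simp add: mat_def)
        then show ?thesis using gs by (simp add: matrix_matrix_mult_def)
      qed
      have "ka_scalar G c (snd c p) = (\<Sum>i\<in>UNIV. \<Sum>j\<in>UNIV. matrix_inv ?g $ i $ j * (f p * ?g $ i $ j))"
        unfolding ka_scalar_def using assms(4) c p by simp
      also have "\<dots> = f p * (\<Sum>i\<in>UNIV. \<Sum>j\<in>UNIV. matrix_inv ?g $ i $ j * ?g $ i $ j)"
        by (simp add: sum_distrib_left algebra_simps)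
      also have "\<dots> = f p * real CARD('n)" using diag by simp
      also have "\<dots> = f p0 * real CARD('n)" using const pX by simp
      finally show "ka_scalar G c (snd c p) = f p0 * real CARD('n)" .
    qed
  qed
qed

end
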